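(* In the setting of the context, fix $\beta>0$. Then $\omega\in\overline{W_{\overline{\mathbb{R}}\times\{\beta\}}(T)\setminus i\mathbb{R}}$ if and only if $\omega\in\{0,\infty\}$ (only $\omega=\infty$ if $c=0$), or $\omega_\Im\neq0$ and one of the following four equations holds: $$\omega_\Re=\pm\sqrt{P_{\omega_\Im}\pm\sqrt{P_{\omega_\Im}^2-Q_{\omega_\Im}}-\omega_\Im^2},$$ where $$P_{\omega_\Im}:=c-\frac{d^2}{2}-d\omega_\Im-\frac{\beta d}{4\omega_\Im},\qquad Q_{\omega_\Im}:=\beta c+c^2+2cd\omega_\Im+4c\omega_\Im^2.$$
   Context: Let $c\ge0$, $d>0$, $\delta_\pm:=\pm\sqrt{c-d^2/4}-id/2$; $\sqrt{\cdot}$ is the principal square root. For real $\alpha,\beta$ let $p_{(\alpha,\beta)}(\omega):=(\alpha-\omega^2)(c-id\omega-\omega^2)-\beta\omega^2$ with roots $r_1,\dots,r_4$ labelled continuously in $(\alpha,\beta)\in\mathbb{R}^2$ and extended by limits to $\alpha=\pm\infty$ (roots $\delta_+,\delta_-$ and $\infty$ twice), values in $\overline{\mathbb{C}}$. $W_{\overline{\mathbb{R}}\times\{\beta\}}(T):=\bigcup_{n=1}^4\{r_n(\alpha,\beta):\alpha\in\mathbb{R}\cup\{\pm\infty\}\}$; overline denotes closure in $\overline{\mathbb{C}}$; $\omega=\omega_\Re+i\omega_\Im$. *)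

theory Defs
  imports "HOL-Analysis.Analysis"
begin

text \<open>The extended complex plane (Riemann sphere) is modelled as \<open>complex option\<close>,
  with \<open>None\<close> the point at infinity and \<open>Some z\<close> the finite point z.
  Its topology is the one-point compactification of the complex plane:
  U is open iff its finite part is open, and if U contains infinity then
  the complement of its finite part is compact.\<close>

definition ext_open :: "complex option set \<Rightarrow> bool" where
  "ext_open U \<longleftrightarrow> open (Some -` U) \<and> (None \<in> U \<longrightarrow> compact (- (Some -` U)))"

definition ext_plane :: "complex option topology" where
  "ext_plane = topology ext_open"

definition delta_p :: "real \<Rightarrow> real \<Rightarrow> complex" where
  "delta_p c d = csqrt (complex_of_real (c - d^2/4)) - \<i> * complex_of_real (d/2)"

definition delta_m :: "real \<Rightarrow> real \<Rightarrow> complex" where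
  "delta_m c d = - csqrt (complex_of_real (c - d^2/4)) - \<i> * complex_of_real (d/2)"

definition pT :: "real \<Rightarrow> real \<Rightarrow> real \<Rightarrow> real \<Rightarrow> complex \<Rightarrow> complex" where
  "pT c d \<alpha> \<beta> \<omega> =
     (complex_of_real \<alpha> - \<omega>^2) * (complex_of_real c - \<i> * complex_of_real d * \<omega> - \<omega>^2)
     - complex_of_real \<beta> * \<omega>^2"

text \<open>W over (extended reals) x {beta}: the union over all alpha in R of all roots of
  p_(alpha,beta), together with the limit roots delta_plus, delta_minus, infinity
  obtained at alpha = +-infinity.\<close>

definition W_ext :: "real \<Rightarrow> real \<Rightarrow> real \<Rightarrow> complex option set" where
  "W_ext c d \<beta> =
     Some ` {\<omega>. \<exists>\<alpha>::real. pT c d \<alpha> \<beta> \<omega> = 0}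
     \<union> {Some (delta_p c d), Some (delta_m c d), None}"

definition P_fun :: "real \<Rightarrow> real \<Rightarrow> real \<Rightarrow> real \<Rightarrow> real" where
  "P_fun c d \<beta> y = c - d^2/2 - d*y - \<beta>*d/(4*y)"

definition Q_fun :: "real \<Rightarrow> real \<Rightarrow> real \<Rightarrow> real \<Rightarrow> real" where
  "Q_fun c d \<beta> y = \<beta>*c + c^2 + 2*c*d*y + 4*c*y^2"

end

theory Submission
  imports Defs
begin


lemma istop_ext: "istopology ext_open"
  unfolding istopology_def ext_open_def
proof (rule conjI; intro allI impI)
  fix S T :: "complex option set"
  assume S: "open (Some -` S) \<and> (None \<in> S \<longrightarrow> compact (- (Some -` S)))"
     and T: "open (Some -` T) \<and> (None \<in> T \<longrightarrow> compact (- (Some -` T)))"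
  show "open (Some -` (S \<inter> T)) \<and> (None \<in> S \<inter> T \<longrightarrow> compact (- (Some -` (S \<inter> T))))"
  proof
    show "open (Some -` (S \<inter> T))" using S T by (simp add: vimage_Int open_Int)
    show "None \<in> S \<inter> T \<longrightarrow> compact (- (Some -` (S \<inter> T)))"
      using S T by (simp add: vimage_Int compact_Un)
  qed
next
  fix K :: "complex option set set"
  assume K: "\<forall>S\<in>K. open (Some -` S) \<and> (None \<in> S \<longrightarrow> compact (- (Some -` S)))"
  have o: "open (Some -` \<Union>K)" using K by (auto simp: vimage_Union intro!: open_Union)
  moreover have "None \<in> \<Union>K \<longrightarrow> compact (- (Some -` \<Union>K))"
  proof
    assume "None \<in> \<Union>K"
    then obtain S where S: "S \<in> K" "None \<in> S" by auto
    then have c: "compact (- (Some -` S))" using K by auto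
    have "- (Some -` \<Union>K) = - (Some -` S) \<inter> - (Some -` \<Union>K)" using S by auto
    moreover have "closed (- (Some -` \<Union>K))" using o by (simp add: closed_Compl)
    ultimately show "compact (- (Some -` \<Union>K))" using c by (metis compact_Int_closed)
  qed
  ultimately show "open (Some -` \<Union>K) \<and> (None \<in> \<Union>K \<longrightarrow> compact (- (Some -` \<Union>K)))" by blast
qed

lemma openin_ext: "openin ext_plane = ext_open"
  by (simp add: ext_plane_def istop_ext)

lemma topspace_ext: "topspace ext_plane = UNIV"
proof -
  have "openin ext_plane UNIV" by (simp add: openin_ext ext_open_def)
  then show ?thesis using openin_subset by blast
qed

lemma cl_None: "None \<in> S \<Longrightarrow> None \<in> ext_plane closure_of S"
  using closure_of_subset[of S ext_plane] by (auto simp: topspace_ext)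

lemma cl_Some: "Some z \<in> ext_plane closure_of S \<longleftrightarrow> z \<in> closure (Some -` S)"
proof
  assume h: "Some z \<in> ext_plane closure_of S"
  show "z \<in> closure (Some -` S)"
    unfolding closure_approachable
  proof (intro allI impI)
    fix e :: real assume e: "e > 0"
    have "openin ext_plane (Some ` ball z e)"
      by (simp add: openin_ext ext_open_def inj_vimage_image_eq)
    then obtain y where "y \<in> S" "y \<in> Some ` ball z e"
      using h e unfolding in_closure_of by (meson centre_in_ball image_eqI)
    then obtain w where "Some w \<in> S" "dist w z < e" by (auto simp: dist_commute)
    then show "\<exists>y\<in>Some -` S. dist y z < e" by blast
  qed
next
  assume h: "z \<in> closure (Some -` S)"
  show "Some z \<in> ext_plane closure_of S"
    unfolding in_closure_of topspace_ext
  proof (intro conjI allI impI UNIV_I)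
    fix T assume T: "Some z \<in> T \<and> openin ext_plane T"
    then have "open (Some -` T)" "z \<in> Some -` T" by (auto simp: openin_ext ext_open_def)
    then obtain e where e: "e > 0" "ball z e \<subseteq> Some -` T" using open_contains_ball by blast
    then obtain w where w: "w \<in> Some -` S" "dist w z < e" using h unfolding closure_approachable by blast
    then have "w \<in> ball z e" by (simp add: dist_commute)
    then show "\<exists>y. y \<in> S \<and> y \<in> T" using e w by blast
  qed
qed



definition Lf :: "real \<Rightarrow> real \<Rightarrow> real \<Rightarrow> real \<Rightarrow> real" where
  "Lf c d \<beta> y = 2*y*(d^2 + 2*d*y + 2*y^2 - 2*c) + \<beta>*d"
definition hf :: "real \<Rightarrow> real \<Rightarrow> real \<Rightarrow> real \<Rightarrow> real" where
  "hf c d \<beta> y = 2*(c + d*y + y^2)^2 + \<beta>*(2*c + d*y)"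
definition gf :: "real \<Rightarrow> real \<Rightarrow> real \<Rightarrow> real \<Rightarrow> real \<Rightarrow> real" where
  "gf c d \<beta> u y = 2*y*u^2 + Lf c d \<beta> y * u + y * hf c d \<beta> y"

lemma gf_AB:
  "2*y*((c + d*y - x^2 + y^2)^2 + (-d*x - 2*x*y)^2) + \<beta>*(2*y*(c + d*y - x^2 + y^2) + (x^2-y^2)*(d+2*y))
   = gf c d \<beta> (x^2) y"
  unfolding gf_def Lf_def hf_def by algebra

lemma gf_E:
  assumes "y \<noteq> 0"
  shows "gf c d \<beta> (x^2) y = 2*y*((x^2+y^2)^2 - 2*P_fun c d \<beta> y*(x^2+y^2) + Q_fun c d \<beta> y)"
  using assms unfolding gf_def Lf_def hf_def P_fun_def Q_fun_def by (simp add: field_simps) algebra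

lemma D_fac:
  "(z - delta_p c d) * (z - delta_m c d) = - (complex_of_real c - \<i> * complex_of_real d * z - z^2)"
proof -
  have s: "(csqrt (complex_of_real (c - d^2/4)))^2 = complex_of_real (c - d^2/4)" by simp
  show ?thesis unfolding delta_p_def delta_m_def
    using s by (simp add: algebra_simps power2_eq_square)
qed

lemma root_iff:
  fixes z :: complex
  assumes x: "Re z \<noteq> 0" and b: "\<beta> > 0"
  shows "((\<exists>\<alpha>::real. pT c d \<alpha> \<beta> z = 0) \<or> z = delta_p c d \<or> z = delta_m c d)
         \<longleftrightarrow> gf c d \<beta> ((Re z)^2) (Im z) = 0"
proof -
  define D where "D = complex_of_real c - \<i> * complex_of_real d * z - z^2"
  have ReD: "Re D = c + d*Im z - (Re z)^2 + (Im z)^2" and ImD: "Im D = -d*Re z - 2*Re z*Im z"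
    unfolding D_def by (simp_all add: power2_eq_square algebra_simps)
  have D0: "D = 0 \<longleftrightarrow> z = delta_p c d \<or> z = delta_m c d"
    using D_fac[of z c d] unfolding D_def by auto
  define M where "M = z^2 * D + of_real \<beta> * z^2"
  have "Im (M * cnj D) = 2 * Re z * Im z * ((Re D)^2 + (Im D)^2)
        + \<beta> * (2*Re z*Im z*Re D - ((Re z)^2 - (Im z)^2)*Im D)"
    by (simp add: M_def power2_eq_square algebra_simps)
  also have "\<dots> = Re z * (2*Im z*((c + d*Im z - (Re z)^2 + (Im z)^2)^2 + (-d*Re z - 2*Re z*Im z)^2)
      + \<beta>*(2*Im z*(c + d*Im z - (Re z)^2 + (Im z)^2) + ((Re z)^2-(Im z)^2)*(d+2*Im z)))"
    unfolding ReD ImD by algebra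
  finally have ImN: "Im (M * cnj D) = Re z * gf c d \<beta> ((Re z)^2) (Im z)"
    using gf_AB by simp
  have pT_eq: "\<And>\<alpha>. pT c d \<alpha> \<beta> z = (of_real \<alpha> - z^2) * D - of_real \<beta> * z^2"
    by (simp add: pT_def D_def)
  show ?thesis
  proof
    assume L: "(\<exists>\<alpha>::real. pT c d \<alpha> \<beta> z = 0) \<or> z = delta_p c d \<or> z = delta_m c d"
    show "gf c d \<beta> ((Re z)^2) (Im z) = 0"
    proof (cases "D = 0")
      case True
      then have "Re D = 0" "Im D = 0" by simp_all
      then have "Re z * (d + 2*Im z) = 0" using ImD by (simp add: algebra_simps)
      then have "d + 2*Im z = 0" using x by simp
      moreover have "-d*Re z - 2*Re z*Im z = 0" using ImD \<open>Im D = 0\<close> by simp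
      ultimately show ?thesis using gf_AB[of "Im z" c d "Re z" \<beta>] \<open>Re D = 0\<close> ReD by simp
    next
      case False
      then obtain \<alpha> where "pT c d \<alpha> \<beta> z = 0" using L D0 by auto
      then have "of_real \<alpha> * D = M" using pT_eq[of \<alpha>] unfolding M_def by (simp add: algebra_simps)
      then have "M * cnj D = of_real (\<alpha> * (cmod D)^2)"
        by (metis complex_norm_square mult.assoc of_real_mult)
      then have "Im (M * cnj D) = 0" by simp
      then show ?thesis using ImN x by simp
    qed
  next
    assume g: "gf c d \<beta> ((Re z)^2) (Im z) = 0"
    show "(\<exists>\<alpha>::real. pT c d \<alpha> \<beta> z = 0) \<or> z = delta_p c d \<or> z = delta_m c d"
    proof (cases "D = 0")
      case True then show ?thesis using D0 by blast
    next
      case False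
      have "Im (M * cnj D) = 0" using ImN g by simp
      then have N: "M * cnj D = of_real (Re (M * cnj D))" by (simp add: complex_eq_iff)
      define \<alpha> where "\<alpha> = Re (M * cnj D) / (cmod D)^2"
      have nz: "cmod D \<noteq> 0" using False by simp
      have "of_real \<alpha> * (D * cnj D) = M * cnj D"
        unfolding complex_norm_square[symmetric] \<alpha>_def using nz N
        by (simp add: field_simps)
      then have "of_real \<alpha> * D = M" using False by (simp add: mult.assoc[symmetric])
      then have "pT c d \<alpha> \<beta> z = 0" using pT_eq[of \<alpha>] unfolding M_def by (simp add: algebra_simps)
      then show ?thesis by blast
    qed
  qed
qed

lemma sq_pm:
  fixes a w :: complex
  shows "(\<exists>s\<in>{1,-1::complex}. a = s * csqrt w) \<longleftrightarrow> a^2 = w"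
proof
  assume "\<exists>s\<in>{1,-1::complex}. a = s * csqrt w"
  then show "a^2 = w" by (auto simp: power_mult_distrib)
next
  assume h: "a^2 = w"
  have "(a - csqrt w) * (a + csqrt w) = a^2 - (csqrt w)^2" by (simp add: algebra_simps power2_eq_square)
  also have "\<dots> = 0" using h by simp
  finally have "a = csqrt w \<or> a = - csqrt w" by (simp add: eq_neg_iff_add_eq_0)
  then show "\<exists>s\<in>{1,-1::complex}. a = s * csqrt w" by auto
qed

lemma rhs_iff:
  assumes y: "Im z \<noteq> 0"
  shows "(\<exists>s1\<in>{1, -1::complex}. \<exists>s2\<in>{1, -1::complex}.
               complex_of_real (Re z) =
                 s1 * csqrt (complex_of_real (P_fun c d \<beta> (Im z))
                             + s2 * csqrt (complex_of_real ((P_fun c d \<beta> (Im z))^2 - Q_fun c d \<beta> (Im z)))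
                             - complex_of_real ((Im z)^2)))
         \<longleftrightarrow> gf c d \<beta> ((Re z)^2) (Im z) = 0" (is "?L \<longleftrightarrow> _")
proof -
  define P where "P = P_fun c d \<beta> (Im z)"
  define Q where "Q = Q_fun c d \<beta> (Im z)"
  define x where "x = Re z"
  define y where "y = Im z"
  have "?L \<longleftrightarrow> (\<exists>s2\<in>{1, -1::complex}. \<exists>s1\<in>{1, -1::complex}.
     complex_of_real x = s1 * csqrt (complex_of_real P + s2 * csqrt (complex_of_real (P^2 - Q)) - complex_of_real (y^2)))"
    unfolding P_def Q_def x_def y_def by blast
  also have "\<dots> \<longleftrightarrow> (\<exists>s2\<in>{1, -1::complex}.
     (complex_of_real x)^2 = complex_of_real P + s2 * csqrt (complex_of_real (P^2 - Q)) - complex_of_real (y^2))"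
    using sq_pm by blast
  also have "\<dots> \<longleftrightarrow> (\<exists>s2\<in>{1, -1::complex}.
     complex_of_real (x^2 + y^2 - P) = s2 * csqrt (complex_of_real (P^2 - Q)))"
    by (auto simp: algebra_simps)
  also have "\<dots> \<longleftrightarrow> (complex_of_real (x^2 + y^2 - P))^2 = complex_of_real (P^2 - Q)"
    by (rule sq_pm)
  also have "\<dots> \<longleftrightarrow> (x^2 + y^2 - P)^2 = P^2 - Q"
    by (metis of_real_eq_iff of_real_power)
  also have "\<dots> \<longleftrightarrow> 2*y*((x^2+y^2)^2 - 2*P*(x^2+y^2) + Q) = 0"
  proof -
    have e: "(x^2 + y^2 - P)^2 - (P^2 - Q) = (x^2+y^2)^2 - 2*P*(x^2+y^2) + Q" by algebra
    have "y \<noteq> 0" using y unfolding y_def .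
    then show ?thesis using e by (smt (verit, ccfv_threshold) mult_eq_0_iff)
  qed
  also have "\<dots> \<longleftrightarrow> gf c d \<beta> ((Re z)^2) (Im z) = 0"
    using gf_E[OF y, of c d \<beta> x] unfolding P_def Q_def x_def y_def by simp
  finally show ?thesis .
qed



lemma cont_nbhd_pos:
  fixes f :: "'a::metric_space \<Rightarrow> real"
  assumes "isCont f x" "f x > 0"
  shows "\<exists>\<delta>>0. \<forall>y. dist y x < \<delta> \<longrightarrow> f y > 0"
proof -
  have "eventually (\<lambda>y. f y > 0) (at x)"
    using assms unfolding isCont_def by (rule order_tendstoD(1))
  then obtain \<delta> where "\<delta> > 0" "\<forall>y. y \<noteq> x \<and> dist y x < \<delta> \<longrightarrow> f y > 0"
    unfolding eventually_at by blast
  then show ?thesis using assms(2) by (metis)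
qed

lemma cont_pos_right:
  fixes f :: "real \<Rightarrow> real"
  assumes "isCont f 0" "f 0 > 0" "e > 0"
  shows "\<exists>t. 0 < t \<and> t < e \<and> f t > 0"
proof -
  obtain \<delta> where d: "\<delta> > 0" "\<forall>y. dist y 0 < \<delta> \<longrightarrow> f y > 0" using cont_nbhd_pos[OF assms(1,2)] by blast
  define t where "t = min e \<delta> / 2"
  have "0 < t" "t < e" "dist t 0 < \<delta>" using d assms(3) by (auto simp: t_def dist_real_def)
  then show ?thesis using d by blast
qed

lemma cont_pos_left:
  fixes f :: "real \<Rightarrow> real"
  assumes "isCont f 0" "f 0 > 0" "e > 0"
  shows "\<exists>t. -e < t \<and> t < 0 \<and> f t > 0"
proof -
  obtain \<delta> where d: "\<delta> > 0" "\<forall>y. dist y 0 < \<delta> \<longrightarrow> f y > 0" using cont_nbhd_pos[OF assms(1,2)] by blast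
  define t where "t = - (min e \<delta> / 2)"
  have "-e < t" "t < 0" "dist t 0 < \<delta>" using d assms(3) by (auto simp: t_def dist_real_def)
  then show ?thesis using d by blast
qed

lemma approx_root:
  fixes g :: "real \<Rightarrow> real \<Rightarrow> real" and \<sigma> :: real
  assumes cy: "\<And>u. continuous_on UNIV (\<lambda>y. g u y)"
    and cu: "\<And>y. continuous_on UNIV (\<lambda>u. g u y)"
    and u1: "\<And>\<epsilon>. \<epsilon> > 0 \<Longrightarrow> \<exists>u. 0 < u \<and> u < \<epsilon> \<and> \<sigma> * g u y0 < 0"
    and y1: "\<And>\<epsilon>. \<epsilon> > 0 \<Longrightarrow> \<exists>y. \<bar>y - y0\<bar> < \<epsilon> \<and> \<sigma> * g 0 y > 0"
    and e: "\<epsilon> > 0"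
  shows "\<exists>u y. 0 < u \<and> u < \<epsilon> \<and> \<bar>y - y0\<bar> < \<epsilon> \<and> g u y = 0"
proof -
  obtain u1 where u: "0 < u1" "u1 < \<epsilon>" "\<sigma> * g u1 y0 < 0" using u1 e by blast
  have "isCont (\<lambda>y. - (\<sigma> * g u1 y)) y0"
    using cy[of u1] by (intro continuous_intros) (simp add: continuous_on_eq_continuous_at)
  then obtain \<delta> where d: "\<delta> > 0" "\<forall>y. dist y y0 < \<delta> \<longrightarrow> - (\<sigma> * g u1 y) > 0"
    using cont_nbhd_pos[of y0 "\<lambda>y. - (\<sigma> * g u1 y)"] u by auto
  obtain y where y: "\<bar>y - y0\<bar> < min \<epsilon> \<delta>" "\<sigma> * g 0 y > 0" using y1[of "min \<epsilon> \<delta>"] e d by auto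
  have neg: "\<sigma> * g u1 y < 0" using d y by (auto simp: dist_real_def)
  have "continuous_on {0..u1} (\<lambda>u. \<sigma> * g u y)"
    using cu[of y] by (intro continuous_intros) (auto intro: continuous_on_subset)
  then obtain u where "0 \<le> u" "u \<le> u1" "\<sigma> * g u y = 0"
    using IVT2'[of "\<lambda>u. \<sigma> * g u y" u1 0 0] neg y u by auto
  moreover have "u \<noteq> 0" "u \<noteq> u1" using calculation y neg by auto
  ultimately show ?thesis using u y
    by (metis min_less_iff_conj mult_eq_0_iff less_irrefl order_le_less order_less_trans)
qed



lemma hf_taylor:
  "hf c d \<beta> (y0 + t) = hf c d \<beta> y0 + (4*(c + d*y0 + y0^2)*(d + 2*y0) + \<beta>*d) * t
     + (2*(d + 2*y0)^2 + 4*(c + d*y0 + y0^2)) * t^2 + 4*(d + 2*y0) * t^3 + 2 * t^4"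
  unfolding hf_def by algebra

lemma hsign:
  assumes d: "d > 0" and b: "\<beta> > 0" and y0: "y0 < 0" and h0: "hf c d \<beta> y0 = 0" and e: "e > 0"
  shows "(Lf c d \<beta> y0 > 0 \<longrightarrow> (\<exists>y. \<bar>y - y0\<bar> < e \<and> hf c d \<beta> y > 0))
       \<and> (Lf c d \<beta> y0 \<le> 0 \<longrightarrow> (\<exists>y. \<bar>y - y0\<bar> < e \<and> hf c d \<beta> y < 0))"
proof -
  define A0 where "A0 = c + d*y0 + y0^2"
  define sv where "sv = d + 2*y0"
  define h1 where "h1 = 4*A0* sv + \<beta>*d"
  define h2 where "h2 = 2* sv^2 + 4*A0"
  have tay: "\<And>t. hf c d \<beta> (y0 + t) = h1 * t + h2 * t^2 + 4* sv*t^3 + 2*t^4"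
    using hf_taylor[of c d \<beta> y0] h0 unfolding h1_def h2_def A0_def sv_def by simp
  have both: "(\<exists>y. \<bar>y - y0\<bar> < e \<and> hf c d \<beta> y > 0) \<and> (\<exists>y. \<bar>y - y0\<bar> < e \<and> hf c d \<beta> y < 0)"
    if h1nz: "h1 \<noteq> 0"
  proof -
    define f where "f = (\<lambda>t. h1 + h2 * t + 4* sv*t^2 + 2*t^3)"
    have ft: "\<And>t. hf c d \<beta> (y0 + t) = t * f t" unfolding f_def tay by algebra
    have cf: "isCont f 0" "isCont (\<lambda>t. - f t) 0" unfolding f_def by (intro continuous_intros)+
    show ?thesis
    proof (cases "h1 > 0")
      case True
      then have "f 0 > 0" by (simp add: f_def)
      then obtain t1 where t1: "0 < t1" "t1 < e" "f t1 > 0" using cont_pos_right[OF cf(1) _ e] by blast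
      obtain t2 where t2: "-e < t2" "t2 < 0" "f t2 > 0" using cont_pos_left[OF cf(1) \<open>f 0 > 0\<close> e] by blast
      have "hf c d \<beta> (y0 + t1) > 0" using ft t1 by simp
      moreover have "hf c d \<beta> (y0 + t2) < 0" using ft t2 by (simp add: mult_neg_pos)
      moreover have "\<bar>(y0 + t1) - y0\<bar> < e" "\<bar>(y0 + t2) - y0\<bar> < e" using t1 t2 by auto
      ultimately show ?thesis by blast
    next
      case False
      then have "- f 0 > 0" using h1nz by (simp add: f_def)
      then obtain t1 where t1: "0 < t1" "t1 < e" "- f t1 > 0" using cont_pos_right[OF cf(2) _ e] by blast
      obtain t2 where t2: "-e < t2" "t2 < 0" "- f t2 > 0" using cont_pos_left[OF cf(2) \<open>- f 0 > 0\<close> e] by blast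
      have "hf c d \<beta> (y0 + t1) < 0" using ft t1 by (simp add: mult_pos_neg)
      moreover have "hf c d \<beta> (y0 + t2) > 0" using ft t2 by (simp add: mult_neg_neg)
      moreover have "\<bar>(y0 + t1) - y0\<bar> < e" "\<bar>(y0 + t2) - y0\<bar> < e" using t1 t2 by auto
      ultimately show ?thesis by blast
    qed
  qed
  show ?thesis
  proof (cases "h1 = 0")
    case False
    then show ?thesis using both by blast
  next
    case True
    have A0nz: "A0 \<noteq> 0" using True b d unfolding h1_def by auto
    have h0': "2*A0^2 + \<beta>*(2*c + d*y0) = 0" using h0 unfolding hf_def A0_def by simp
    have "2*A0*(d*A0 - 2 * sv*(2*c+d*y0)) = d*(2*A0^2 + \<beta>*(2*c + d*y0)) - (2*c+d*y0)*h1"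
      unfolding h1_def by algebra
    then have "2*A0*(d*A0 - 2 * sv*(2*c+d*y0)) = 0" using h0' True by simp
    then have E3: "d*A0 - 2* sv*(2*c+d*y0) = 0" using A0nz by simp
    have "6*Lf c d \<beta> y0 + 2*y0*h2 = 8*(d*A0 - 2* sv*(2*c+d*y0)) + 6*h1"
      unfolding Lf_def h2_def h1_def A0_def sv_def by algebra
    then have rel: "3*Lf c d \<beta> y0 + y0*h2 = 0" using E3 True by simp
    show ?thesis
    proof (cases "h2 = 0")
      case h2z: True
      have L0: "Lf c d \<beta> y0 = 0" using rel h2z by simp
      have "A0 = -((sv^2) / 2)" using h2z unfolding h2_def by simp
      then have "\<beta>*d = 2* sv^3" using True unfolding h1_def by (simp add: power2_eq_square power3_eq_cube)
      moreover have "\<beta>*d > 0" using b d by simp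
      ultimately have "sv^3 > 0" by simp
      then have sp: "sv > 0" using zero_less_power_eq[of sv 3] by auto
      define t where "t = min (e/2) sv"
      have t: "t > 0" "t \<le> sv" "t < e" using sp e by (auto simp: t_def)
      have "hf c d \<beta> (y0 + (-t)) = t^3 * (2*t - 4* sv)" using tay[of "-t"] True h2z by algebra
      moreover have "t^3 * (2*t - 4* sv) < 0" using t by (intro mult_pos_neg) auto
      ultimately have "hf c d \<beta> (y0 - t) < 0" by simp
      moreover have "\<bar>(y0 - t) - y0\<bar> < e" using t by simp
      ultimately show ?thesis using L0 by (auto intro!: exI[of _ "y0 - t"])
    next
      case h2nz: False
      define f where "f = (\<lambda>t. h2 + 4* sv*t + 2*t^2)"
      have ft: "\<And>t. hf c d \<beta> (y0 + t) = t^2 * f t" unfolding f_def tay True by algebra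
      have cf: "isCont f 0" "isCont (\<lambda>t. - f t) 0" unfolding f_def by (intro continuous_intros)+
      have "Lf c d \<beta> y0 = (-y0) * h2 / 3" using rel by simp
      moreover have "(-y0) * h2 > 0 \<longleftrightarrow> h2 > 0" using y0 by (auto simp: zero_less_mult_iff mult_less_0_iff)
      ultimately have pos: "h2 > 0 \<longleftrightarrow> Lf c d \<beta> y0 > 0" by simp
      show ?thesis
      proof (cases "h2 > 0")
        case True
        then have "f 0 > 0" by (simp add: f_def)
        then obtain t1 where t1: "0 < t1" "t1 < e" "f t1 > 0" using cont_pos_right[OF cf(1) _ e] by blast
        have "hf c d \<beta> (y0 + t1) > 0" using ft t1 by simp
        moreover have "\<bar>(y0 + t1) - y0\<bar> < e" using t1 by auto
        ultimately show ?thesis using pos True by (auto intro!: exI[of _ "y0 + t1"])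
      next
        case False
        then have "- f 0 > 0" using h2nz by (simp add: f_def)
        then obtain t1 where t1: "0 < t1" "t1 < e" "- f t1 > 0" using cont_pos_right[OF cf(2) _ e] by blast
        have "hf c d \<beta> (y0 + t1) < 0" using ft t1 by (simp add: mult_pos_neg)
        moreover have "\<bar>(y0 + t1) - y0\<bar> < e" using t1 by auto
        ultimately show ?thesis using pos False by (auto intro!: exI[of _ "y0 + t1"])
      qed
    qed
  qed
qed



lemma gf_cont_y: "continuous_on UNIV (\<lambda>y. gf c d \<beta> u y)"
  unfolding gf_def Lf_def hf_def by (intro continuous_intros)
lemma gf_cont_u: "continuous_on UNIV (\<lambda>u. gf c d \<beta> u y)"
  unfolding gf_def Lf_def hf_def by (intro continuous_intros)
lemma G_cont: "continuous_on UNIV (\<lambda>z. gf c d \<beta> ((Re z)^2) (Im z))"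
  unfolding gf_def Lf_def hf_def by (intro continuous_intros)

lemma approx_closure:
  assumes h: "\<And>\<epsilon>. \<epsilon> > 0 \<Longrightarrow> \<exists>u y. 0 < u \<and> u < \<epsilon> \<and> \<bar>y - y0\<bar> < \<epsilon> \<and> gf c d \<beta> u y = 0"
  shows "Complex 0 y0 \<in> closure {z. Re z \<noteq> 0 \<and> gf c d \<beta> ((Re z)^2) (Im z) = 0}"
  unfolding closure_approachable
proof (intro allI impI)
  fix e :: real assume e: "e > 0"
  obtain u y where uy: "0 < u" "u < min (e/2) ((e/2)^2)" "\<bar>y - y0\<bar> < min (e/2) ((e/2)^2)" "gf c d \<beta> u y = 0"
    using h[of "min (e/2) ((e/2)^2)"] e by auto
  define w where "w = Complex (sqrt u) y"
  have "Re w \<noteq> 0" "(Re w)^2 = u" "Im w = y" using uy by (auto simp: w_def)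
  then have inS: "w \<in> {z. Re z \<noteq> 0 \<and> gf c d \<beta> ((Re z)^2) (Im z) = 0}" using uy by simp
  have "sqrt u < sqrt ((e/2)^2)" using uy by (intro real_sqrt_less_mono) auto
  then have su: "sqrt u < e/2" using e by simp
  have "dist w (Complex 0 y0) = cmod (Complex (sqrt u) (y - y0))"
    by (simp add: w_def dist_norm complex_diff)
  also have "\<dots> \<le> \<bar>sqrt u\<bar> + \<bar>y - y0\<bar>" using cmod_le[of "Complex (sqrt u) (y - y0)"] by simp
  also have "\<dots> < e" using su uy by auto
  finally show "\<exists>y\<in>{z. Re z \<noteq> 0 \<and> gf c d \<beta> ((Re z)^2) (Im z) = 0}. dist y (Complex 0 y0) < e"
    using inS by blast
qed

lemma closureT:
  assumes c: "c \<ge> 0" and d: "d > 0" and b: "\<beta> > 0"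
  shows "z \<in> closure {z. Re z \<noteq> 0 \<and> gf c d \<beta> ((Re z)^2) (Im z) = 0}
     \<longleftrightarrow> (z = 0 \<and> c \<noteq> 0) \<or> (Im z \<noteq> 0 \<and> gf c d \<beta> ((Re z)^2) (Im z) = 0)"
    (is "z \<in> closure ?T \<longleftrightarrow> _")
proof
  assume zc: "z \<in> closure ?T"
  have "closed {z. gf c d \<beta> ((Re z)^2) (Im z) = 0}"
    using G_cont[of c d \<beta>] by (intro closed_Collect_eq) (auto intro: continuous_intros)
  then have "closure ?T \<subseteq> {z. gf c d \<beta> ((Re z)^2) (Im z) = 0}"
    by (intro closure_minimal) auto
  then have G0: "gf c d \<beta> ((Re z)^2) (Im z) = 0" using zc by auto
  show "(z = 0 \<and> c \<noteq> 0) \<or> (Im z \<noteq> 0 \<and> gf c d \<beta> ((Re z)^2) (Im z) = 0)"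
  proof (cases "Im z = 0")
    case False then show ?thesis using G0 by blast
  next
    case True
    then have "\<beta> * d * (Re z)^2 = 0" using G0 by (simp add: gf_def Lf_def)
    then have "Re z = 0" using b d by simp
    then have z0: "z = 0" using True by (simp add: complex_eq_iff)
    have "c \<noteq> 0"
    proof
      assume c0: "c = 0"
      define F1 where "F1 = (\<lambda>w::complex. Lf c d \<beta> (Im w) + 2 * Im w * (Re w)^2)"
      define F2 where "F2 = (\<lambda>w::complex. \<beta> * d + 2 * Im w * (d + Im w)^2)"
      have GF: "\<And>w. gf c d \<beta> ((Re w)^2) (Im w) = (Re w)^2 * F1 w + (Im w)^2 * F2 w"
        unfolding gf_def F1_def F2_def hf_def c0 by algebra
      have "isCont (\<lambda>w. min (F1 w) (F2 w)) 0" unfolding F1_def F2_def Lf_def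
        by (intro continuous_intros continuous_Re[OF continuous_ident] continuous_Im[OF continuous_ident])
      moreover have "min (F1 0) (F2 0) > 0" using b d by (simp add: F1_def F2_def Lf_def)
      ultimately obtain \<delta> where dl: "\<delta> > 0" "\<forall>w. dist w 0 < \<delta> \<longrightarrow> min (F1 w) (F2 w) > 0"
        using cont_nbhd_pos[of 0 "\<lambda>w. min (F1 w) (F2 w)"] by auto
      have "\<exists>w\<in>?T. dist w z < \<delta>" using zc[unfolded closure_approachable] dl(1) by blast
      then obtain w where w: "w \<in> ?T" "dist w 0 < \<delta>" using z0 by blast
      have "F1 w > 0" "F2 w > 0" using dl w by auto
      moreover have "(Re w)^2 > 0" using w by simp
      ultimately have "(Re w)^2 * F1 w + (Im w)^2 * F2 w > 0"
        by (intro add_pos_nonneg mult_pos_pos mult_nonneg_nonneg) auto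
      then show False using w GF by simp
    qed
    then show ?thesis using z0 by blast
  qed
next
  assume r: "(z = 0 \<and> c \<noteq> 0) \<or> (Im z \<noteq> 0 \<and> gf c d \<beta> ((Re z)^2) (Im z) = 0)"
  show "z \<in> closure ?T"
  proof (cases "z = 0 \<and> c \<noteq> 0")
    case True
    then have cp: "c > 0" using c by simp
    have "Complex 0 0 \<in> closure ?T"
    proof (rule approx_closure)
      fix \<epsilon> :: real assume e: "\<epsilon> > 0"
      show "\<exists>u y. 0 < u \<and> u < \<epsilon> \<and> \<bar>y - 0\<bar> < \<epsilon> \<and> gf c d \<beta> u y = 0"
      proof (rule approx_root[of "gf c d \<beta>" "-1"])
        show "\<And>u. continuous_on UNIV (\<lambda>y. gf c d \<beta> u y)" by (rule gf_cont_y)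
        show "\<And>y. continuous_on UNIV (\<lambda>u. gf c d \<beta> u y)" by (rule gf_cont_u)
        fix \<epsilon>' :: real assume e': "\<epsilon>' > 0"
        show "\<exists>u. 0 < u \<and> u < \<epsilon>' \<and> -1 * gf c d \<beta> u 0 < 0"
          using e' b d by (intro exI[of _ "\<epsilon>'/2"]) (simp add: gf_def Lf_def)
        have "isCont (hf c d \<beta>) 0" unfolding hf_def by (intro continuous_intros)
        moreover have "hf c d \<beta> 0 > 0" using cp b by (simp add: hf_def add_pos_pos)
        ultimately obtain t where t: "-\<epsilon>' < t" "t < 0" "hf c d \<beta> t > 0"
          using cont_pos_left[of "hf c d \<beta>" \<epsilon>'] e' by blast
        then have "gf c d \<beta> 0 t < 0" by (simp add: gf_def mult_neg_pos)
        then show "\<exists>y. \<bar>y - 0\<bar> < \<epsilon>' \<and> -1 * gf c d \<beta> 0 y > 0"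
          using t by (intro exI[of _ t]) auto
      qed (rule e)
    qed
    then show ?thesis using True by (simp add: zero_complex.ctr)
  next
    case False
    then have yz: "Im z \<noteq> 0" and G0: "gf c d \<beta> ((Re z)^2) (Im z) = 0" using r by auto
    show ?thesis
    proof (cases "Re z = 0")
      case False
      then have "z \<in> ?T" using G0 by simp
      then show ?thesis by (meson closure_subset subsetD)
    next
      case True
      define y0 where "y0 = Im z"
      have zc: "z = Complex 0 y0" using True by (simp add: y0_def complex_eq_iff)
      have "y0 * hf c d \<beta> y0 = 0" using G0 True by (simp add: gf_def y0_def)
      then have h0: "hf c d \<beta> y0 = 0" using yz by (simp add: y0_def)
      moreover have "2*(c + d*y0 + y0^2)^2 \<ge> 0" by simp
      ultimately have "\<beta> * (2*c + d*y0) \<le> 0" unfolding hf_def by linarith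
      then have "2*c + d*y0 \<le> 0" using b by (simp add: mult_le_0_iff)
      then have "d * y0 \<le> 0" using c by linarith
      then have "y0 \<le> 0" using d by (auto simp: mult_le_0_iff)
      moreover have "y0 \<noteq> 0" using yz by (simp add: y0_def)
      ultimately have y0n: "y0 < 0" by simp
      have "Complex 0 y0 \<in> closure ?T"
      proof (rule approx_closure)
        fix \<epsilon> :: real assume e: "\<epsilon> > 0"
        show "\<exists>u y. 0 < u \<and> u < \<epsilon> \<and> \<bar>y - y0\<bar> < \<epsilon> \<and> gf c d \<beta> u y = 0"
        proof (cases "Lf c d \<beta> y0 > 0")
          case Lp: True
          show ?thesis
          proof (rule approx_root[of "gf c d \<beta>" "-1"])
            show "\<And>u. continuous_on UNIV (\<lambda>y. gf c d \<beta> u y)" by (rule gf_cont_y)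
            show "\<And>y. continuous_on UNIV (\<lambda>u. gf c d \<beta> u y)" by (rule gf_cont_u)
            fix \<epsilon>' :: real assume e': "\<epsilon>' > 0"
            define u where "u = min (\<epsilon>'/2) (Lf c d \<beta> y0 / (-4*y0))"
            have u: "0 < u" "u < \<epsilon>'" "u \<le> Lf c d \<beta> y0 / (-4*y0)"
              using e' Lp y0n by (auto simp: u_def divide_pos_neg)
            then have "-4*y0*u \<le> Lf c d \<beta> y0" using y0n by (simp add: field_simps)
            then have "2*y0*u + Lf c d \<beta> y0 > 0" using Lp by linarith
            then have "u * (2*y0*u + Lf c d \<beta> y0) > 0" using u by simp
            moreover have "gf c d \<beta> u y0 = u * (2*y0*u + Lf c d \<beta> y0)"
              using h0 by (simp add: gf_def algebra_simps power2_eq_square)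
            ultimately show "\<exists>u. 0 < u \<and> u < \<epsilon>' \<and> -1 * gf c d \<beta> u y0 < 0" using u by auto
            obtain y where y: "\<bar>y - y0\<bar> < min \<epsilon>' (-y0)" "hf c d \<beta> y > 0"
              using hsign[OF d b y0n h0, of "min \<epsilon>' (-y0)"] e' y0n Lp by auto
            then have "y < 0" by auto
            then have "gf c d \<beta> 0 y < 0" using y by (simp add: gf_def mult_neg_pos)
            then show "\<exists>y. \<bar>y - y0\<bar> < \<epsilon>' \<and> -1 * gf c d \<beta> 0 y > 0"
              using y by (intro exI[of _ y]) auto
          qed (rule e)
        next
          case Ln: False
          show ?thesis
          proof (rule approx_root[of "gf c d \<beta>" "1"])
            show "\<And>u. continuous_on UNIV (\<lambda>y. gf c d \<beta> u y)" by (rule gf_cont_y)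
            show "\<And>y. continuous_on UNIV (\<lambda>u. gf c d \<beta> u y)" by (rule gf_cont_u)
            fix \<epsilon>' :: real assume e': "\<epsilon>' > 0"
            have "y0*\<epsilon>' < 0" using y0n e' by (simp add: mult_neg_pos)
            then have "2*y0*(\<epsilon>'/2) + Lf c d \<beta> y0 < 0" using Ln by simp
            then have "(\<epsilon>'/2) * (2*y0*(\<epsilon>'/2) + Lf c d \<beta> y0) < 0" using e' by (simp add: mult_pos_neg)
            moreover have "gf c d \<beta> (\<epsilon>'/2) y0 = (\<epsilon>'/2) * (2*y0*(\<epsilon>'/2) + Lf c d \<beta> y0)"
              using h0 by (simp add: gf_def algebra_simps power2_eq_square)
            ultimately show "\<exists>u. 0 < u \<and> u < \<epsilon>' \<and> 1 * gf c d \<beta> u y0 < 0" using e'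
              by (intro exI[of _ "\<epsilon>'/2"]) auto
            obtain y where y: "\<bar>y - y0\<bar> < min \<epsilon>' (-y0)" "hf c d \<beta> y < 0"
              using hsign[OF d b y0n h0, of "min \<epsilon>' (-y0)"] e' y0n Ln by auto
            then have "y < 0" by auto
            then have "gf c d \<beta> 0 y > 0" using y by (simp add: gf_def mult_neg_neg)
            then show "\<exists>y. \<bar>y - y0\<bar> < \<epsilon>' \<and> 1 * gf c d \<beta> 0 y > 0"
              using y by (intro exI[of _ y]) auto
          qed (rule e)
        qed
      qed
      then show ?thesis using zc by simp
    qed
  qed
qed


theorem proposition3p7:
  fixes c d \<beta> :: real and \<omega> :: "complex option"
  assumes "c \<ge> 0" and "d > 0" and "\<beta> > 0"
  shows "\<omega> \<in> ext_plane closure_of (W_ext c d \<beta> - Some ` {z. Re z = 0})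
    \<longleftrightarrow> (\<omega> = None \<or> (\<omega> = Some 0 \<and> c \<noteq> 0) \<or>
         (\<exists>z. \<omega> = Some z \<and> Im z \<noteq> 0 \<and>
            (\<exists>s1\<in>{1, -1::complex}. \<exists>s2\<in>{1, -1::complex}.
               complex_of_real (Re z) =
                 s1 * csqrt (complex_of_real (P_fun c d \<beta> (Im z))
                             + s2 * csqrt (complex_of_real ((P_fun c d \<beta> (Im z))^2 - Q_fun c d \<beta> (Im z)))
                             - complex_of_real ((Im z)^2)))))"
proof -
  define S where "S = W_ext c d \<beta> - Some ` {z. Re z = 0}"
  have TS: "Some -` S = {z. Re z \<noteq> 0 \<and> gf c d \<beta> ((Re z)^2) (Im z) = 0}"
  proof (rule set_eqI)
    fix z
    show "z \<in> Some -` S \<longleftrightarrow> z \<in> {z. Re z \<noteq> 0 \<and> gf c d \<beta> ((Re z)^2) (Im z) = 0}"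
    proof (cases "Re z = 0")
      case True then show ?thesis by (auto simp: S_def)
    next
      case False
      have "Some z \<in> W_ext c d \<beta> \<longleftrightarrow> ((\<exists>\<alpha>::real. pT c d \<alpha> \<beta> z = 0) \<or> z = delta_p c d \<or> z = delta_m c d)"
        by (auto simp: W_ext_def)
      moreover have "Some z \<notin> Some ` {z. Re z = 0}" using False by auto
      ultimately show ?thesis using root_iff[OF False assms(3), of c d] False by (auto simp: S_def)
    qed
  qed
  show ?thesis
  proof (cases \<omega>)
    case None
    have "None \<in> S" by (auto simp: S_def W_ext_def)
    then show ?thesis using cl_None None unfolding S_def by auto
  next
    case (Some z)
    have "\<omega> \<in> ext_plane closure_of S \<longleftrightarrow> (z = 0 \<and> c \<noteq> 0) \<or> (Im z \<noteq> 0 \<and> gf c d \<beta> ((Re z)^2) (Im z) = 0)"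
      unfolding Some cl_Some TS using closureT[OF assms] by simp
    also have "\<dots> \<longleftrightarrow> (z = 0 \<and> c \<noteq> 0) \<or> (Im z \<noteq> 0 \<and>
            (\<exists>s1\<in>{1, -1::complex}. \<exists>s2\<in>{1, -1::complex}.
               complex_of_real (Re z) =
                 s1 * csqrt (complex_of_real (P_fun c d \<beta> (Im z))
                             + s2 * csqrt (complex_of_real ((P_fun c d \<beta> (Im z))^2 - Q_fun c d \<beta> (Im z)))
                             - complex_of_real ((Im z)^2))))"
      using rhs_iff[of z c d \<beta>] by blast
    finally show ?thesis unfolding S_def Some by auto
  qed
qed

end
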